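(* Every sub-correlation matrix $\xi$ satisfies $\mathrm{Tr}[\xi\tau]\le1$ for all $\tau\in\mathsf P(S)$. Conversely, if $W\ge0$ satisfies $\mathrm{Tr}[W\tau]\le1$ for all $\tau\in\mathsf P(S)$, then $W/d$ is a sub-correlation matrix.
   Context: $S$ is a $d$-dimensional quantum system with non-degenerate Hamiltonian $H=\sum_i E_i|i\rangle\langle i|$, $E_1<\dots<E_d$; matrices are written in this eigenbasis. $\mathsf P(S)$ is the set of passive states, i.e. density matrices $\sum_i p_i|i\rangle\langle i|$ with $p_1\ge\dots\ge p_d$. A sub-correlation matrix is a positive semidefinite $d\times d$ matrix $\xi$ with $\xi_{ii}\le1$ for all $i$. *)

theory Defs
  imports "Jordan_Normal_Form.Matrix" "HOL-Library.Complex_Order"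
begin

text \<open>Matrices are d x d complex matrices, written in the energy eigenbasis
  |0>,...,|d-1> ordered by strictly increasing energy (indices shifted to start at 0).\<close>

definition psd_mat :: "nat \<Rightarrow> complex mat \<Rightarrow> bool" where
  "psd_mat d A \<longleftrightarrow> A \<in> carrier_mat d d
     \<and> (\<forall>i<d. \<forall>j<d. A $$ (i, j) = cnj (A $$ (j, i)))
     \<and> (\<forall>v :: nat \<Rightarrow> complex.
          0 \<le> (\<Sum>i<d. \<Sum>j<d. cnj (v i) * A $$ (i, j) * v j))"

definition sub_correlation_mat :: "nat \<Rightarrow> complex mat \<Rightarrow> bool" where
  "sub_correlation_mat d X \<longleftrightarrow> psd_mat d X \<and> (\<forall>i<d. X $$ (i, i) \<le> 1)"

definition passive_state :: "nat \<Rightarrow> complex mat \<Rightarrow> bool" where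
  "passive_state d \<tau> \<longleftrightarrow> (\<exists>p :: nat \<Rightarrow> real.
      (\<forall>i<d. 0 \<le> p i) \<and> (\<Sum>i<d. p i) = 1
      \<and> (\<forall>i j. i \<le> j \<longrightarrow> j < d \<longrightarrow> p j \<le> p i)
      \<and> \<tau> = mat d d (\<lambda>(i, j). if i = j then complex_of_real (p i) else 0))"

definition mat_trace :: "complex mat \<Rightarrow> complex" where
  "mat_trace A = (\<Sum>i<dim_row A. A $$ (i, i))"

end

theory Submission
  imports Defs
begin

lemma trace_diag:
  assumes A: "A \<in> carrier_mat d d"
  shows "mat_trace (A * mat d d (\<lambda>(i, j). if i = j then complex_of_real (p i) else 0))
     = (\<Sum>i<d. A $$ (i, i) * complex_of_real (p i))"
proof -
  have "\<And>i. i < d \<Longrightarrow> (A * mat d d (\<lambda>(i, j). if i = j then complex_of_real (p i) else 0)) $$ (i, i)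
      = A $$ (i, i) * complex_of_real (p i)"
  proof -
    fix i assume i: "i < d"
    have "(A * mat d d (\<lambda>(i, j). if i = j then complex_of_real (p i) else 0)) $$ (i, i)
       = (\<Sum>k\<in>{0..<d}. A $$ (i, k) * (if k = i then complex_of_real (p k) else 0))"
      using A i by (simp add: scalar_prod_def)
    also have "\<dots> = (\<Sum>k\<in>{0..<d}. if k = i then A $$ (i, k) * complex_of_real (p k) else 0)"
      by (intro sum.cong) auto
    also have "\<dots> = A $$ (i, i) * complex_of_real (p i)" using i by simp
    finally show "(A * mat d d (\<lambda>(i, j). if i = j then complex_of_real (p i) else 0)) $$ (i, i)
      = A $$ (i, i) * complex_of_real (p i)" .
  qed
  then show ?thesis using A unfolding mat_trace_def by (auto intro: sum.cong)
qed

lemma psd_diag_nonneg: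
  assumes "psd_mat d W" "i < d"
  shows "0 \<le> W $$ (i, i)"
proof -
  define v where "v = (\<lambda>k::nat. if k = i then (1::complex) else 0)"
  have "0 \<le> (\<Sum>a<d. \<Sum>b<d. cnj (v a) * W $$ (a, b) * v b)"
    using assms(1) unfolding psd_mat_def by blast
  also have "(\<Sum>a<d. \<Sum>b<d. cnj (v a) * W $$ (a, b) * v b) = W $$ (i, i)"
  proof -
    have 1: "\<And>a. (\<Sum>b<d. cnj (v a) * W $$ (a, b) * v b) = (\<Sum>b<d. if b = i then cnj (v a) * W $$ (a, b) else 0)"
      by (rule sum.cong) (auto simp: v_def)
    have 2: "\<And>a. (\<Sum>b<d. cnj (v a) * W $$ (a, b) * v b) = cnj (v a) * W $$ (a, i)"
      unfolding 1 using assms(2) by (subst sum.delta) auto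
    have 3: "(\<Sum>a<d. cnj (v a) * W $$ (a, i)) = (\<Sum>a<d. if a = i then W $$ (a, i) else 0)"
      by (rule sum.cong) (auto simp: v_def)
    show ?thesis unfolding 2 3 using assms(2) by (subst sum.delta) auto
  qed
  finally show ?thesis .
qed

theorem mainTheorem13:
  fixes d :: nat
  assumes "d \<ge> 1"
  shows "(\<forall>\<xi>. sub_correlation_mat d \<xi> \<longrightarrow>
            (\<forall>\<tau>. passive_state d \<tau> \<longrightarrow> mat_trace (\<xi> * \<tau>) \<le> 1))
       \<and> (\<forall>W. psd_mat d W \<longrightarrow>
            (\<forall>\<tau>. passive_state d \<tau> \<longrightarrow> mat_trace (W * \<tau>) \<le> 1) \<longrightarrow>
            sub_correlation_mat d ((1 / of_nat d) \<cdot>\<^sub>m W))"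
proof (intro conjI allI impI)
  fix \<xi> \<tau> assume xi: "sub_correlation_mat d \<xi>" and t: "passive_state d \<tau>"
  then obtain p where p: "\<forall>i<d. 0 \<le> p i" "(\<Sum>i<d. p i) = 1"
    "\<tau> = mat d d (\<lambda>(i, j). if i = j then complex_of_real (p i) else 0)"
    unfolding passive_state_def by blast
  have C: "\<xi> \<in> carrier_mat d d" using xi unfolding sub_correlation_mat_def psd_mat_def by blast
  have le: "\<forall>i<d. \<xi> $$ (i, i) \<le> 1" using xi unfolding sub_correlation_mat_def by blast
  have "mat_trace (\<xi> * \<tau>) = (\<Sum>i<d. \<xi> $$ (i, i) * complex_of_real (p i))"
    using p(3) trace_diag[OF C] by simp
  also have "\<dots> \<le> (\<Sum>i<d. complex_of_real (p i))"
  proof (rule sum_mono)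
    fix i assume "i \<in> {..<d}"
    then have "\<xi> $$ (i, i) \<le> 1" "0 \<le> p i" using le p by auto
    then obtain x where x: "\<xi> $$ (i, i) = complex_of_real x" "x \<le> 1" "0 \<le> p i"
    proof -
      have "Im (\<xi> $$ (i, i)) = 0" "Re (\<xi> $$ (i, i)) \<le> 1"
        using \<open>\<xi> $$ (i, i) \<le> 1\<close> unfolding less_eq_complex_def by simp_all
      then have "\<xi> $$ (i, i) = complex_of_real (Re (\<xi> $$ (i, i)))" by (simp add: complex_eq_iff)
      from that[OF this \<open>Re (\<xi> $$ (i, i)) \<le> 1\<close> \<open>0 \<le> p i\<close>] show thesis .
    qed
    have "x * p i \<le> 1 * p i" using x(2,3) by (rule mult_right_mono)
    then have "complex_of_real (x * p i) \<le> complex_of_real (p i)" unfolding less_eq_complex_def Re_complex_of_real Im_complex_of_real mult_1 by simp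
    then show "\<xi> $$ (i, i) * complex_of_real (p i) \<le> complex_of_real (p i)"
      unfolding x(1) by (simp only: of_real_mult)
  qed
  also have "\<dots> = 1" using p(2) by (metis of_real_1 of_real_sum)
  finally show "mat_trace (\<xi> * \<tau>) \<le> 1" .
next
  fix W assume W: "psd_mat d W" and H: "\<forall>\<tau>. passive_state d \<tau> \<longrightarrow> mat_trace (W * \<tau>) \<le> 1"
  have C: "W \<in> carrier_mat d d" using W unfolding psd_mat_def by blast
  define u where "u = (\<lambda>i::nat. 1 / real d)"
  have "passive_state d (mat d d (\<lambda>(i, j). if i = j then complex_of_real (u i) else 0))"
    unfolding passive_state_def using assms by (intro exI[of _ u]) (auto simp: u_def)
  then have "mat_trace (W * mat d d (\<lambda>(i, j). if i = j then complex_of_real (u i) else 0)) \<le> 1"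
    using H by blast
  then have tr: "(\<Sum>i<d. W $$ (i, i) * complex_of_real (1 / real d)) \<le> 1"
    using trace_diag[OF C] by (simp add: u_def)
  have nn: "\<And>i. i < d \<Longrightarrow> 0 \<le> W $$ (i, i)" using psd_diag_nonneg[OF W] by blast
  have dpos: "0 < real d" using assms by simp
  show "sub_correlation_mat d ((1 / of_nat d) \<cdot>\<^sub>m W)"
    unfolding sub_correlation_mat_def psd_mat_def
  proof (intro conjI allI impI)
    show "(1 / of_nat d) \<cdot>\<^sub>m W \<in> carrier_mat d d" using C by simp
  next
    fix i j assume "i < d" "j < d"
    then show "((1 / of_nat d) \<cdot>\<^sub>m W) $$ (i, j) = cnj (((1 / of_nat d) \<cdot>\<^sub>m W) $$ (j, i))"
    proof -
      have "W $$ (i, j) = cnj (W $$ (j, i))" using W \<open>i < d\<close> \<open>j < d\<close> unfolding psd_mat_def by blast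
      then show ?thesis using C \<open>i < d\<close> \<open>j < d\<close> by simp
    qed
  next
    fix v :: "nat \<Rightarrow> complex"
    have e1: "(\<Sum>a<d. \<Sum>b<d. cnj (v a) * ((1 / of_nat d) \<cdot>\<^sub>m W) $$ (a, b) * v b)
        = (1 / of_nat d) * (\<Sum>a<d. \<Sum>b<d. cnj (v a) * W $$ (a, b) * v b)"
      using C by (simp add: sum_distrib_left mult_ac)
    have e2: "0 \<le> (\<Sum>a<d. \<Sum>b<d. cnj (v a) * W $$ (a, b) * v b)"
      using W unfolding psd_mat_def by blast
    have e3: "(0::complex) \<le> 1 / of_nat d" by (simp add: less_eq_complex_def)
    show "0 \<le> (\<Sum>a<d. \<Sum>b<d. cnj (v a) * ((1 / of_nat d) \<cdot>\<^sub>m W) $$ (a, b) * v b)"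
      unfolding e1 by (rule mult_nonneg_nonneg[OF e3 e2])
  next
    fix i assume i: "i < d"
    have "W $$ (i, i) * complex_of_real (1 / real d)
        \<le> (\<Sum>k<d. W $$ (k, k) * complex_of_real (1 / real d))"
      by (rule member_le_sum) (use i nn dpos in \<open>auto simp: less_eq_complex_def\<close>)
    then have "W $$ (i, i) * complex_of_real (1 / real d) \<le> 1" using tr by (rule order_trans)
    then show "((1 / of_nat d) \<cdot>\<^sub>m W) $$ (i, i) \<le> 1"
      using i C by (simp add: mult.commute)
  qed
qed

end
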